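(* Let $\rho,\sigma$ be retractable contracts with $\rho$ compliant with $\sigma$. Then one of the following holds: (1) $\rho=\mathbf 1$; (2) $\rho=\sum_{i\in I}\alpha_i.\rho_i$ and $\sigma=\sum_{j\in J}\bar\alpha_j.\sigma_j$ (retractable choices) and there exists $k\in I\cap J$ such that $\rho_k$ is compliant with $\sigma_k$; (3) $\rho=\bigoplus_{i\in I}\bar a_i.\rho_i$, $\sigma=\sum_{j\in J}a_j.\sigma_j$, $I\subseteq J$, and $\rho_k$ is compliant with $\sigma_k$ for all $k\in I$; (4) $\rho=\sum_{i\in I}a_i.\rho_i$, $\sigma=\bigoplus_{j\in J}\bar a_j.\sigma_j$, $I\supseteq J$, and $\rho_k$ is compliant with $\sigma_k$ for all $k\in J$.
   Context: Let $\mathcal N$ be a countable set of names and $\overline{\mathcal N}=\{\bar a\mid a\in\mathcal N\}$ a disjoint set of conames; $\alpha$ ranges over $\mathcal N\cup\overline{\mathcal N}$, with $\bar{\bar a}=a$. Retractable contracts are the closed expressions generated by $\sigma ::= \mathbf 1 \mid \sum_{i\in I} a_i.\sigma_i \ (\text{input}) \mid \sum_{i\in I}\bar a_i.\sigma_i\ (\text{retractable output}) \mid \bigoplus_{i\in I}\bar a_i.\sigma_i\ (\text{unretractable output}) \mid x \mid \mathsf{rec}\,x.\sigma$, where $I$ is non-empty and finite, names/conames in each choice are pairwise distinct, and $\sigma$ is not a variable in $\mathsf{rec}\,x.\sigma$. Choices are commutative; $\mathsf{rec}\,x.\sigma$ is identified with $\sigma[\mathsf{rec}\,x.\sigma/x]$.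 A unary $\bar a.\sigma$ may be read as either kind of output. Sums written $\sum$ are retractable choices (input or retractable output). Histories are stacks $\vec\gamma ::= [\,] \mid \vec\gamma:\sigma$ with $\sigma$ a retractable contract or the special symbol $\circ$. A contract with history is a pair $\langle\vec\gamma,\sigma\rangle$ with $\sigma$ a contract or $\circ$. Transitions: $\langle\vec\gamma,\alpha.\sigma+\sigma'\rangle\xrightarrow{\alpha}\langle\vec\gamma:\sigma',\sigma\rangle$ (for retractable choices); $\langle\vec\gamma,\bar a.\sigma\oplus\sigma'\rangle\xrightarrow{\tau}\langle\vec\gamma,\bar a.\sigma\rangle$; $\langle\vec\gamma,\alpha.\sigma\rangle\xrightarrow{\alpha}\langle\vec\gamma:\circ,\sigma\rangle$; $\langle\vec\gamma:\sigma',\sigma\rangle\xrightarrow{\mathsf{rb}}\langle\vec\gamma,\sigma'\rangle$. Client/server pairs $\langle\vec\delta,\rho\rangle\parallel\langle\vec\gamma,\sigma\rangle$ reduce by: (comm) if $\langle\vec\delta,\rho\rangle\xrightarrow{\alpha}\langle\vec\delta',\rho'\rangle$ and $\langle\vec\gamma,\sigma\rangle\xrightarrow{\bar\alpha}\langle\vec\gamma',\sigma'\rangle$ then the pair reduces to $\langle\vec\delta',\rho'\rangle\parallel\langle\vec\gamma',\sigma'\rangle$; ($\tau$) a $\tau$-transition of either component alone; (rbk) if both components do an $\mathsf{rb}$ transition and $\rho\neq\mathbf 1$, both roll back simultaneously; rule (rbk) applies only if neither (comm) nor ($\tau$) applies. Then $\langle\vec\delta,\rho\rangle$ is compliant with $\langle\vec\gamma,\sigma\rangle$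 if whenever $\langle\vec\delta,\rho\rangle\parallel\langle\vec\gamma,\sigma\rangle$ reduces in finitely many steps to a pair $\langle\vec\delta',\rho'\rangle\parallel\langle\vec\gamma',\sigma'\rangle$ with no further reduction, we have $\rho'=\mathbf 1$. A contract $\rho$ is compliant with $\sigma$ if $\langle[\,],\rho\rangle$ is compliant with $\langle[\,],\sigma\rangle$. *)

theory Defs
  imports "HOL-Library.Finite_Map"
begin

text \<open>A contract is represented coinductively: recursion  rec x.sigma  is identified with its
unfolding, so closed contractive terms correspond exactly to regular trees (see rcontract).
Choices are finite maps from names to continuations (names pairwise distinct, commutativity
for free).  Inp = input sum, ROut = retractable output sum, UOut = unretractable output.\<close>

codatatype 'n contract =
    One
  | Inp "('n, 'n contract) fmap"
  | ROut "('n, 'n contract) fmap"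
  | UOut "('n, 'n contract) fmap"

datatype 'n act = In 'n | Out 'n

fun dual :: "'n act \<Rightarrow> 'n act" where
  "dual (In a) = Out a"
| "dual (Out a) = In a"

fun children :: "'n contract \<Rightarrow> 'n contract set" where
  "children One = {}"
| "children (Inp f) = fmran' f"
| "children (ROut f) = fmran' f"
| "children (UOut f) = fmran' f"

fun nonempty_top :: "'n contract \<Rightarrow> bool" where
  "nonempty_top One = True"
| "nonempty_top (Inp f) = (fmdom f \<noteq> {||})"
| "nonempty_top (ROut f) = (fmdom f \<noteq> {||})"
| "nonempty_top (UOut f) = (fmdom f \<noteq> {||})"

inductive reach :: "'n contract \<Rightarrow> 'n contract \<Rightarrow> bool" where
  refl: "reach r r"
| step: "reach r s \<Longrightarrow> t \<in> children s \<Longrightarrow> reach r t"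

text \<open>Retractable contracts: regular trees (finitely many subtrees) all of whose choices
are non-empty.\<close>
definition rcontract :: "'n contract \<Rightarrow> bool" where
  "rcontract r \<longleftrightarrow> finite {s. reach r s} \<and> (\<forall>s. reach r s \<longrightarrow> nonempty_top s)"

text \<open>A unary output may be read as either kind of output.\<close>
definition is_uout :: "'n contract \<Rightarrow> ('n, 'n contract) fmap \<Rightarrow> bool" where
  "is_uout r f \<longleftrightarrow> r = UOut f \<or> (r = ROut f \<and> fcard (fmdom f) = 1)"

fun is_rsum :: "'n contract \<Rightarrow> bool" where
  "is_rsum One = False"
| "is_rsum (Inp f) = True"
| "is_rsum (ROut f) = True"
| "is_rsum (UOut f) = (fcard (fmdom f) = 1)"

fun rbr :: "'n contract \<Rightarrow> 'n act \<Rightarrow> 'n contract option" where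
  "rbr (Inp f) (In a) = fmlookup f a"
| "rbr (ROut f) (Out a) = fmlookup f a"
| "rbr (UOut f) (Out a) = (if fcard (fmdom f) = 1 then fmlookup f a else None)"
| "rbr _ _ = None"

text \<open>Stack elements and current component: Some sigma or None (the symbol circ).
The top of the stack is the head of the list.\<close>
type_synonym 'n hist = "'n contract option list"
type_synonym 'n hc = "'n hist \<times> 'n contract option"

datatype 'n lbl = Act "'n act" | Tau | Rb

definition resid :: "(('n, 'n contract) fmap \<Rightarrow> 'n contract) \<Rightarrow> ('n, 'n contract) fmap
    \<Rightarrow> 'n \<Rightarrow> 'n contract option" where
  "resid C f a = (if fmdom' f = {a} then None else Some (C (fmdrop a f)))"

inductive trans :: "'n hc \<Rightarrow> 'n lbl \<Rightarrow> 'n hc \<Rightarrow> bool" where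
  inp: "fmlookup f a = Some s \<Longrightarrow>
     trans (h, Some (Inp f)) (Act (In a)) (resid Inp f a # h, Some s)"
| rout: "fmlookup f a = Some s \<Longrightarrow>
     trans (h, Some (ROut f)) (Act (Out a)) (resid ROut f a # h, Some s)"
| uout_unary: "fmlookup f a = Some s \<Longrightarrow> fmdom' f = {a} \<Longrightarrow>
     trans (h, Some (UOut f)) (Act (Out a)) (None # h, Some s)"
| uout_tau: "fmlookup f a = Some s \<Longrightarrow> fmdom' f \<noteq> {a} \<Longrightarrow>
     trans (h, Some (UOut f)) Tau (h, Some (UOut (fmupd a s fmempty)))"
| rb: "trans (Some s' # h, c) Rb (h, Some s')"
| rb_circ: "trans (None # h, c) Rb (h, None)"

inductive red0 :: "'n hc \<times> 'n hc \<Rightarrow> 'n hc \<times> 'n hc \<Rightarrow> bool" where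
  comm: "trans c (Act al) c' \<Longrightarrow> trans s (Act (dual al)) s' \<Longrightarrow> red0 (c, s) (c', s')"
| tauL: "trans c Tau c' \<Longrightarrow> red0 (c, s) (c', s)"
| tauR: "trans s Tau s' \<Longrightarrow> red0 (c, s) (c, s')"

inductive red :: "'n hc \<times> 'n hc \<Rightarrow> 'n hc \<times> 'n hc \<Rightarrow> bool" where
  base: "red0 p q \<Longrightarrow> red p q"
| rbk: "trans c Rb c' \<Longrightarrow> trans s Rb s' \<Longrightarrow> snd c \<noteq> Some One \<Longrightarrow>
        (\<nexists>q. red0 (c, s) q) \<Longrightarrow> red (c, s) (c', s')"

definition compliant_h :: "'n hc \<Rightarrow> 'n hc \<Rightarrow> bool" where
  "compliant_h c s \<longleftrightarrow>
     (\<forall>c' s'. red\<^sup>*\<^sup>* (c, s) (c', s') \<longrightarrow> (\<nexists>q. red (c', s') q) \<longrightarrow> snd c' = Some One)"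

definition compliant :: "'n contract \<Rightarrow> 'n contract \<Rightarrow> bool" where
  "compliant r s \<longleftrightarrow> compliant_h ([], Some r) ([], Some s)"

end

theory Submission
  imports Defs
begin

definition bad :: "'n hc \<times> 'n hc \<Rightarrow> bool" where
  "bad p \<longleftrightarrow> (\<exists>q. red\<^sup>*\<^sup>* p q \<and> (\<nexists>r. red q r) \<and> snd (fst q) \<noteq> Some One)"

lemma compliant_bad: "compliant r s \<longleftrightarrow> \<not> bad (([], Some r), ([], Some s))"
  unfolding compliant_def compliant_h_def bad_def by (metis prod.collapse fst_conv)

lemma bad_steps: "red\<^sup>*\<^sup>* p q \<Longrightarrow> bad q \<Longrightarrow> bad p"
  unfolding bad_def by (meson rtranclp_trans)

lemma bad_step: "red p q \<Longrightarrow> bad q \<Longrightarrow> bad p"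
  by (rule bad_steps) auto

lemma bad_stuck: "(\<nexists>r. red q r) \<Longrightarrow> snd (fst q) \<noteq> Some One \<Longrightarrow> bad q"
  unfolding bad_def by blast

lemma trans_Rb_nonempty: "trans (h, c) Rb q \<Longrightarrow> h \<noteq> []"
  by (auto elim: trans.cases)

lemma stuck_empty: "(\<nexists>r. red0 (([], c), ([], s)) r) \<Longrightarrow> \<nexists>r. red (([], c), ([], s)) r"
  by (auto elim!: red.cases dest: trans_Rb_nonempty)

lemma bad_stuck_empty: "(\<nexists>r. red0 (([], c), ([], s)) r) \<Longrightarrow> c \<noteq> Some One \<Longrightarrow> bad (([], c), ([], s))"
  using stuck_empty[of c s] bad_stuck[of "(([], c), ([], s))"] by simp

lemma trans_None: "\<not> trans (h, None) (Act al) q" "\<not> trans (h, None) Tau q"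
  by (auto elim: trans.cases)
lemma trans_One: "\<not> trans (h, Some One) (Act al) q" "\<not> trans (h, Some One) Tau q"
  by (auto elim: trans.cases)
lemma trans_Inp: "trans (h, Some (Inp f)) (Act al) q \<longleftrightarrow>
   (\<exists>a s. al = In a \<and> fmlookup f a = Some s \<and> q = (resid Inp f a # h, Some s))"
  "\<not> trans (h, Some (Inp f)) Tau q"
  by (auto elim: trans.cases intro: trans.intros)
lemma trans_ROut: "trans (h, Some (ROut f)) (Act al) q \<longleftrightarrow>
   (\<exists>a s. al = Out a \<and> fmlookup f a = Some s \<and> q = (resid ROut f a # h, Some s))"
  "\<not> trans (h, Some (ROut f)) Tau q"
  by (auto elim: trans.cases intro: trans.intros)
lemma trans_UOut: "trans (h, Some (UOut f)) (Act al) q \<longleftrightarrow>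
   (\<exists>a s. al = Out a \<and> fmlookup f a = Some s \<and> fmdom' f = {a} \<and> q = (None # h, Some s))"
  "trans (h, Some (UOut f)) Tau q \<longleftrightarrow>
   (\<exists>a s. fmlookup f a = Some s \<and> fmdom' f \<noteq> {a} \<and> q = (h, Some (UOut (fmupd a s fmempty))))"
   apply (auto elim: trans.cases intro: trans.intros)
  apply (erule trans.cases; auto)
  done

lemmas trans_simps = trans_None trans_One trans_Inp trans_ROut trans_UOut

definition liftp :: "'n hist \<Rightarrow> 'n hc \<Rightarrow> 'n hc" where
  "liftp e p = (fst p @ e, snd p)"

lemma trans_lift: "trans p l q \<Longrightarrow> trans (liftp e p) l (liftp e q)"
  by (induction rule: trans.induct) (auto simp: liftp_def intro: trans.intros)

lemma trans_unlift: "trans (h @ e, c) l q \<Longrightarrow> l \<noteq> Rb \<Longrightarrow> \<exists>q0. q = liftp e q0 \<and> trans (h, c) l q0"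
  by (erule trans.cases) (auto simp: liftp_def intro: trans.intros)

lemma red0_unlift: "red0 (liftp e1 c, liftp e2 s) r \<Longrightarrow> \<exists>r0. red0 (c, s) r0"
proof (erule red0.cases)
  fix c0 al c' s0 s' assume a: "(liftp e1 c, liftp e2 s) = (c0, s0)" "trans c0 (Act al) c'" "trans s0 (Act (dual al)) s'"
  obtain x where "trans c (Act al) x" using a trans_unlift[of "fst c" e1 "snd c" "Act al" c'] by (auto simp: liftp_def)
  moreover obtain y where "trans s (Act (dual al)) y" using a trans_unlift[of "fst s" e2 "snd s" "Act (dual al)" s'] by (auto simp: liftp_def)
  ultimately show ?thesis by (blast intro: red0.comm)
next
  fix c0 c' s0 assume "(liftp e1 c, liftp e2 s) = (c0, s0)" "trans c0 Tau c'"
  then obtain x where "trans c Tau x" using trans_unlift[of "fst c" e1 "snd c" Tau c'] by (auto simp: liftp_def)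
  then show ?thesis by (blast intro: red0.tauL)
next
  fix c0 s0 s' assume "(liftp e1 c, liftp e2 s) = (c0, s0)" "trans s0 Tau s'"
  then obtain x where "trans s Tau x" using trans_unlift[of "fst s" e2 "snd s" Tau s'] by (auto simp: liftp_def)
  then show ?thesis by (blast intro: red0.tauR)
qed

lemma red0_lift: "red0 (c, s) (c', s') \<Longrightarrow> red0 (liftp e1 c, liftp e2 s) (liftp e1 c', liftp e2 s')"
  by (erule red0.cases) (auto intro: red0.comm red0.tauL red0.tauR trans_lift)

definition liftpp :: "'n hist \<Rightarrow> 'n hist \<Rightarrow> 'n hc \<times> 'n hc \<Rightarrow> 'n hc \<times> 'n hc" where
  "liftpp e1 e2 p = (liftp e1 (fst p), liftp e2 (snd p))"

lemma red_lift: "red p q \<Longrightarrow> red (liftpp e1 e2 p) (liftpp e1 e2 q)"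
proof (induction rule: red.induct)
  case (base p q)
  then show ?case by (cases p; cases q) (auto intro!: red.base red0_lift simp: liftpp_def)
next
  case (rbk c c' s s')
  show ?case unfolding liftpp_def fst_conv snd_conv
    apply (rule red.rbk)
    using rbk trans_lift[of c Rb c' e1] trans_lift[of s Rb s' e2]
    by (auto simp: liftp_def dest: red0_unlift[unfolded liftp_def])
qed

lemma reds_lift: "red\<^sup>*\<^sup>* p q \<Longrightarrow> red\<^sup>*\<^sup>* (liftpp e1 e2 p) (liftpp e1 e2 q)"
  by (induction rule: rtranclp_induct) (auto intro: rtranclp.rtrancl_into_rtrancl red_lift)

lemma trans_len: "trans p l q \<Longrightarrow>
  (l = Rb \<longrightarrow> length (fst p) = Suc (length (fst q))) \<and>
  (l = Tau \<longrightarrow> length (fst q) = length (fst p)) \<and>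
  (\<forall>al. l = Act al \<longrightarrow> length (fst q) = Suc (length (fst p)))"
  by (induction rule: trans.induct) auto

lemma red_len: "red p q \<Longrightarrow> length (fst (fst p)) = length (fst (snd p)) \<Longrightarrow>
   length (fst (fst q)) = length (fst (snd q))"
  by (induction rule: red.induct) (auto elim!: red0.cases dest!: trans_len)

lemma reds_len: "red\<^sup>*\<^sup>* p q \<Longrightarrow> length (fst (fst p)) = length (fst (snd p)) \<Longrightarrow>
   length (fst (fst q)) = length (fst (snd q))"
  by (induction rule: rtranclp_induct) (auto dest: red_len)

lemma trans_pop: "trans (x # h, c) Rb (h, x)"
  by (cases x) (auto intro: trans.intros)

lemma lemL: assumes "bad (([], c), ([], s))"
  shows "red\<^sup>*\<^sup>* (([x], c), ([y], s)) (([], x), ([], y))"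
proof -
  obtain h1 c1 h2 s1 where r: "red\<^sup>*\<^sup>* (([], c), ([], s)) ((h1, c1), (h2, s1))"
    and st: "\<nexists>r. red ((h1, c1), (h2, s1)) r" and ne: "c1 \<noteq> Some One"
    using assms unfolding bad_def by force
  have len: "length h1 = length h2" using reds_len[OF r] by simp
  have h1: "h1 = []"
  proof (rule ccontr)
    assume "h1 \<noteq> []"
    then obtain x1 t1 x2 t2 where "h1 = x1 # t1" "h2 = x2 # t2" using len
      by (cases h1; cases h2) auto
    moreover have "\<nexists>q. red0 ((h1, c1), (h2, s1)) q" using st red.base by blast
    ultimately have "red ((h1, c1), (h2, s1)) ((t1, x1), (t2, x2))"
      using ne by (auto intro!: red.rbk trans_pop)
    then show False using st by blast
  qed
  then have h2: "h2 = []" using len by simp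
  have "red\<^sup>*\<^sup>* (liftpp [x] [y] (([], c), ([], s))) (liftpp [x] [y] ((h1, c1), (h2, s1)))"
    by (rule reds_lift[OF r])
  then have 1: "red\<^sup>*\<^sup>* (([x], c), ([y], s)) (([x], c1), ([y], s1))"
    using h1 h2 by (simp add: liftpp_def liftp_def)
  have "\<nexists>q. red0 ((h1, c1), (h2, s1)) q" using st red.base by blast
  then have "\<nexists>q. red0 (([x], c1), ([y], s1)) q"
    using red0_unlift[of "[x]" "(h1, c1)" "[y]" "(h2, s1)"] h1 h2 by (auto simp: liftp_def)
  then have "red (([x], c1), ([y], s1)) (([], x), ([], y))"
    using ne by (auto intro!: red.rbk trans_pop)
  with 1 show ?thesis by simp
qed

fun rres :: "'n contract \<Rightarrow> 'n act \<Rightarrow> 'n contract option" where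
  "rres (Inp f) (In a) = resid Inp f a"
| "rres (ROut f) (Out a) = resid ROut f a"
| "rres _ _ = None"

fun dsz :: "'n contract \<Rightarrow> nat" where
  "dsz One = 0"
| "dsz (Inp f) = card (fmdom' f)"
| "dsz (ROut f) = card (fmdom' f)"
| "dsz (UOut f) = card (fmdom' f)"

lemma card1_dom: "fcard (fmdom f) = 1 \<Longrightarrow> fmlookup f a = Some s \<Longrightarrow> fmdom' f = {a}"
  by (metis card_1_singletonE fcard.rep_eq fmdom'I fmdom'_alt_def singletonD)

lemma dom_card1: "fmdom' f = {a} \<Longrightarrow> fcard (fmdom f) = 1"
  by (simp add: fcard.rep_eq fmdom'_alt_def[symmetric])

lemma rsum_act: "is_rsum \<rho> \<Longrightarrow> trans (h, Some \<rho>) (Act al) q \<longleftrightarrow>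
   (\<exists>\<rho>k. rbr \<rho> al = Some \<rho>k \<and> q = (rres \<rho> al # h, Some \<rho>k))"
  apply (cases \<rho>; cases al)
  apply (auto simp: trans_simps dest: card1_dom dom_card1 intro: fmdom'I)
  apply (metis card1_dom One_nat_def singletonD fmdom'I)+
  done

lemma rsum_tau: "is_rsum \<rho> \<Longrightarrow> \<not> trans (h, Some \<rho>) Tau q"
  by (cases \<rho>) (auto simp: trans_simps dest: card1_dom; metis card1_dom One_nat_def singletonD fmdom'I)+

lemma rsum_not_One: "is_rsum \<rho> \<Longrightarrow> \<rho> \<noteq> One"
  by auto

lemma rres_props: "rbr \<rho> al = Some \<rho>k \<Longrightarrow> rres \<rho> al = Some \<rho>' \<Longrightarrow>
   is_rsum \<rho>' \<and> dsz \<rho>' < dsz \<rho> \<and> (\<forall>al' x. rbr \<rho>' al' = Some x \<longrightarrow> rbr \<rho> al' = Some x)"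
  apply (cases \<rho>; cases al)
  apply (auto simp: resid_def split: if_splits)
  apply (auto intro!: psubset_card_mono dest: fmdom'I)
  apply (case_tac al'; simp split: if_splits)+
  done

lemma stuck_none_client: "\<forall>q. \<not> trans ([], s) Tau q \<Longrightarrow> (\<nexists>r. red0 (([], None), ([], s)) r)"
  by (auto elim!: red0.cases simp: trans_simps)

lemma lemA: "dsz \<rho> = n \<Longrightarrow> is_rsum \<rho> \<Longrightarrow> is_rsum \<sigma> \<Longrightarrow>
  (\<forall>al \<rho>k \<sigma>k. rbr \<rho> al = Some \<rho>k \<longrightarrow> rbr \<sigma> (dual al) = Some \<sigma>k \<longrightarrow> \<not> compliant \<rho>k \<sigma>k) \<Longrightarrow>
  bad (([], Some \<rho>), ([], Some \<sigma>))"
proof (induction n arbitrary: \<rho> \<sigma> rule: less_induct)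
  case (less n \<rho> \<sigma>)
  show ?case
  proof (cases "\<exists>al \<rho>k \<sigma>k. rbr \<rho> al = Some \<rho>k \<and> rbr \<sigma> (dual al) = Some \<sigma>k")
    case True
    then obtain al \<rho>k \<sigma>k where m: "rbr \<rho> al = Some \<rho>k" "rbr \<sigma> (dual al) = Some \<sigma>k" by blast
    define x where "x = rres \<rho> al"
    define y where "y = rres \<sigma> (dual al)"
    have nc: "bad (([], Some \<rho>k), ([], Some \<sigma>k))"
      using less.prems(4) m compliant_bad by blast
    have s1: "red (([], Some \<rho>), ([], Some \<sigma>)) (([x], Some \<rho>k), ([y], Some \<sigma>k))"
      apply (rule red.base, rule red0.comm)
      using rsum_act[OF less.prems(2)] rsum_act[OF less.prems(3)] m unfolding x_def y_def by auto
    have s2: "red\<^sup>*\<^sup>* (([x], Some \<rho>k), ([y], Some \<sigma>k)) (([], x), ([], y))"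
      by (rule lemL[OF nc])
    have "bad (([], x), ([], y))"
    proof (cases x)
      case None
      have "\<forall>q. \<not> trans ([], y) Tau q"
      proof (cases y)
        case (Some \<sigma>')
        show ?thesis using rres_props[OF m(2) Some[unfolded y_def]] rsum_tau Some by blast
      qed (auto simp: trans_simps)
      then have "\<nexists>r. red (([], None), ([], y)) r" using stuck_none_client stuck_empty by blast
      then show ?thesis using None by (intro bad_stuck) auto
    next
      case (Some \<rho>')
      note rp = rres_props[OF m(1) Some[unfolded x_def]]
      show ?thesis
      proof (cases y)
        case None
        have "\<nexists>r. red0 (([], Some \<rho>'), ([], None)) r"
          using rsum_tau[of \<rho>'] rp by (auto elim!: red0.cases simp: trans_simps)
        then show ?thesis using Some None rp by (intro bad_stuck_empty) auto
      next
        case (Some \<sigma>')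
        note rs = rres_props[OF m(2) Some[unfolded y_def]]
        have "bad (([], Some \<rho>'), ([], Some \<sigma>'))"
          apply (rule less.IH[OF _ HOL.refl])
          using rp rs less.prems by (auto, blast)
        then show ?thesis using Some \<open>x = Some \<rho>'\<close> by simp
      qed
    qed
    then show ?thesis using s1 s2 by (meson bad_step bad_steps)
  next
    case False
    have "\<nexists>r. red0 (([], Some \<rho>), ([], Some \<sigma>)) r"
      using False rsum_act[OF less.prems(2)] rsum_act[OF less.prems(3)]
        rsum_tau[OF less.prems(2)] rsum_tau[OF less.prems(3)]
      by (auto elim!: red0.cases) (metis option.distinct(1))
    then show ?thesis using less.prems(2) by (intro bad_stuck_empty) auto
  qed
qed

lemma norsum_match: "is_rsum \<rho> \<Longrightarrow> is_rsum \<sigma> \<Longrightarrow>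
  (\<forall>al. rbr \<rho> al = None \<or> rbr \<sigma> (dual al) = None) \<Longrightarrow> bad (([], Some \<rho>), ([], Some \<sigma>))"
  by (rule lemA[OF HOL.refl]) (auto, metis option.distinct(1))

lemma A': "is_rsum \<rho> \<Longrightarrow> is_rsum \<sigma> \<Longrightarrow> compliant \<rho> \<sigma> \<Longrightarrow>
  (\<exists>al \<rho>k \<sigma>k. rbr \<rho> al = Some \<rho>k \<and> rbr \<sigma> (dual al) = Some \<sigma>k \<and> compliant \<rho>k \<sigma>k)"
  using lemA[OF HOL.refl, of \<rho> \<sigma>] compliant_bad by blast

lemma C1: "is_rsum \<rho> \<Longrightarrow> bad (([], Some \<rho>), ([], Some One))"
  by (rule bad_stuck_empty) (auto elim!: red0.cases simp: trans_simps rsum_tau)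

lemma tauR_step: "fmlookup g a = Some s \<Longrightarrow> fcard (fmdom g) \<noteq> 1 \<Longrightarrow>
  red (c, (h2, Some (UOut g))) (c, (h2, Some (UOut (fmupd a s fmempty))))"
  by (rule red.base, rule red0.tauR, rule trans.uout_tau) (auto dest: dom_card1)

lemma tauL_step: "fmlookup g a = Some s \<Longrightarrow> fcard (fmdom g) \<noteq> 1 \<Longrightarrow>
  red ((h1, Some (UOut g)), c) ((h1, Some (UOut (fmupd a s fmempty))), c)"
  by (rule red.base, rule red0.tauL, rule trans.uout_tau) (auto dest: dom_card1)

lemma single_rsum: "is_rsum (UOut (fmupd a s fmempty))"
  by (simp add: fcard.rep_eq)

lemma ne_dom: "rcontract r \<Longrightarrow> r = UOut g \<Longrightarrow> \<exists>a s. fmlookup g a = Some s"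
proof -
  assume a: "rcontract r" "r = UOut g"
  then have "fmdom g \<noteq> {||}" unfolding rcontract_def using reach.refl[of r] by force
  then obtain x where "x |\<in>| fmdom g" by blast
  then show ?thesis by (auto simp: fmlookup_dom_iff)
qed

lemma C2: "is_rsum \<rho> \<Longrightarrow> (\<forall>f. \<rho> \<noteq> Inp f) \<Longrightarrow> fmlookup g a = Some s \<Longrightarrow> fcard (fmdom g) \<noteq> 1 \<Longrightarrow>
  bad (([], Some \<rho>), ([], Some (UOut g)))"
  apply (rule bad_step[OF tauR_step], assumption+)
  apply (rule norsum_match, assumption, rule single_rsum)
  apply (intro allI, case_tac \<rho>; case_tac al; auto simp: fcard.rep_eq)
  done

lemma C3: "fcard (fmdom f) \<noteq> 1 \<Longrightarrow> fmlookup f a = Some s \<Longrightarrow> (\<forall>g. \<sigma> \<noteq> Inp g) \<Longrightarrow>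
  (\<forall>g. \<sigma> = UOut g \<longrightarrow> (\<exists>b t. fmlookup g b = Some t)) \<Longrightarrow>
  bad (([], Some (UOut f)), ([], Some \<sigma>))"
  apply (rule bad_step[OF tauL_step], assumption+)
  apply (cases \<sigma>; hypsubst)
     apply (rule C1, rule single_rsum)
    apply simp
   apply (rule norsum_match, rule single_rsum, simp)
   apply (intro allI, case_tac al; auto simp: fcard.rep_eq)
  subgoal for g
    apply (cases "fcard (fmdom g) = 1")
     apply (rule norsum_match, rule single_rsum, simp)
     apply (intro allI, case_tac al; auto simp: fcard.rep_eq)
    apply (subgoal_tac "\<exists>b t. fmlookup g b = Some t")
     apply (elim exE)
     apply (rule bad_step[OF tauR_step], assumption+)
     apply (rule norsum_match, rule single_rsum, rule single_rsum)
     apply (intro allI, case_tac al; auto simp: fcard.rep_eq)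
    apply blast
    done
  done

lemma resid_not_One: "resid C f a \<noteq> Some One" if "\<And>x. C x \<noteq> One"
  using that by (simp add: resid_def)

lemma D4a: "fmlookup g a = Some s \<Longrightarrow> fmlookup f a = None \<Longrightarrow> fcard (fmdom g) \<noteq> 1 \<Longrightarrow>
  bad (([], Some (Inp f)), ([], Some (UOut g)))"
  apply (rule bad_step[OF tauR_step], assumption+)
  apply (rule norsum_match, simp, rule single_rsum)
  apply (intro allI, case_tac al; auto simp: fcard.rep_eq)
  done

lemma D4b: "fmlookup g a = Some \<sigma>a \<Longrightarrow> fmlookup f a = Some \<rho>a \<Longrightarrow> fcard (fmdom g) \<noteq> 1 \<Longrightarrow>
  bad (([], Some \<rho>a), ([], Some \<sigma>a)) \<Longrightarrow>
  bad (([], Some (Inp f)), ([], Some (UOut g)))"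
  apply (rule bad_step[OF tauR_step], assumption+)
  apply (rule bad_step)
   apply (rule red.base, rule red0.comm[where al = "In a"], rule trans.inp, assumption)
   apply simp
   apply (rule trans.uout_unary; simp)
  apply (rule bad_steps, erule lemL)
  apply (rule bad_stuck_empty)
   apply (auto elim!: red0.cases simp: trans_simps resid_def)
  done

lemma D3a: "fmlookup f a = Some s \<Longrightarrow> fmlookup g a = None \<Longrightarrow> fcard (fmdom f) \<noteq> 1 \<Longrightarrow>
  bad (([], Some (UOut f)), ([], Some (Inp g)))"
  apply (rule bad_step[OF tauL_step], assumption+)
  apply (rule norsum_match, rule single_rsum, simp)
  apply (intro allI, case_tac al; auto simp: fcard.rep_eq)
  done

lemma D3b: "fmlookup f a = Some \<rho>a \<Longrightarrow> fmlookup g a = Some \<sigma>a \<Longrightarrow> fcard (fmdom f) \<noteq> 1 \<Longrightarrow>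
  bad (([], Some \<rho>a), ([], Some \<sigma>a)) \<Longrightarrow>
  bad (([], Some (UOut f)), ([], Some (Inp g)))"
  apply (rule bad_step[OF tauL_step], assumption+)
  apply (rule bad_step)
   apply (rule red.base, rule red0.comm[where al = "Out a"])
   apply (rule trans.uout_unary; simp)
   apply simp
   apply (rule trans.inp, assumption)
  apply (rule bad_steps, erule lemL)
  apply (rule bad_stuck_empty)
   apply (auto elim!: red0.cases simp: trans_simps resid_def)
  done

theorem lemma4:
  fixes \<rho> \<sigma> :: "'n contract"
  assumes "rcontract \<rho>" and "rcontract \<sigma>" and "compliant \<rho> \<sigma>"
  shows "\<rho> = One
    \<or> (is_rsum \<rho> \<and> is_rsum \<sigma> \<and>
        (\<exists>al \<rho>k \<sigma>k. rbr \<rho> al = Some \<rho>k \<and> rbr \<sigma> (dual al) = Some \<sigma>k \<and> compliant \<rho>k \<sigma>k))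
    \<or> (\<exists>f g. is_uout \<rho> f \<and> \<sigma> = Inp g \<and> fmdom f |\<subseteq>| fmdom g \<and>
        (\<forall>a \<rho>a \<sigma>a. fmlookup f a = Some \<rho>a \<longrightarrow> fmlookup g a = Some \<sigma>a \<longrightarrow> compliant \<rho>a \<sigma>a))
    \<or> (\<exists>f g. \<rho> = Inp f \<and> is_uout \<sigma> g \<and> fmdom g |\<subseteq>| fmdom f \<and>
        (\<forall>a \<rho>a \<sigma>a. fmlookup f a = Some \<rho>a \<longrightarrow> fmlookup g a = Some \<sigma>a \<longrightarrow> compliant \<rho>a \<sigma>a))"
proof -
  have nb: "\<not> bad (([], Some \<rho>), ([], Some \<sigma>))" using assms(3) compliant_bad by blast
  have neS: "\<And>g. \<sigma> = UOut g \<Longrightarrow> \<exists>b t. fmlookup g b = Some t" using ne_dom assms(2) by blast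
  have neR: "\<And>g. \<rho> = UOut g \<Longrightarrow> \<exists>b t. fmlookup g b = Some t" using ne_dom assms(1) by blast
  consider "\<rho> = One" | "is_rsum \<rho>" | f where "\<rho> = UOut f" "fcard (fmdom f) \<noteq> 1"
    by (cases \<rho>) auto
  then show ?thesis
  proof cases
    case 1 then show ?thesis by simp
  next
    case 2
    consider "\<sigma> = One" | "is_rsum \<sigma>" | g where "\<sigma> = UOut g" "fcard (fmdom g) \<noteq> 1"
      by (cases \<sigma>) auto
    then show ?thesis
    proof cases
      case 1 then show ?thesis using C1[OF \<open>is_rsum \<rho>\<close>] nb by simp
    next
      case 2 then show ?thesis using A' \<open>is_rsum \<rho>\<close> assms(3) by blast
    next
      case 3
      show ?thesis
      proof (cases "\<exists>f. \<rho> = Inp f")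
        case False
        obtain b t where "fmlookup g b = Some t" using neS 3 by blast
        then show ?thesis using C2[OF \<open>is_rsum \<rho>\<close> _ _ 3(2)] False nb 3 by blast
      next
        case True
        then obtain f where f: "\<rho> = Inp f" by blast
        have sub: "fmdom g |\<subseteq>| fmdom f"
        proof
          fix a assume "a |\<in>| fmdom g"
          then obtain s where "fmlookup g a = Some s" by (auto simp: fmlookup_dom_iff)
          then show "a |\<in>| fmdom f" using D4a[of g a s f] 3 f nb by (auto simp: fmlookup_dom_iff)
        qed
        have "\<forall>a \<rho>a \<sigma>a. fmlookup f a = Some \<rho>a \<longrightarrow> fmlookup g a = Some \<sigma>a \<longrightarrow> compliant \<rho>a \<sigma>a"
          using D4b[of g _ _ f] 3 f nb compliant_bad by blast
        then show ?thesis using sub f 3 by (auto simp: is_uout_def)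
      qed
    qed
  next
    case 3
    show ?thesis
    proof (cases "\<exists>g. \<sigma> = Inp g")
      case False
      obtain b t where "fmlookup f b = Some t" using neR 3 by blast
      then show ?thesis using C3[OF 3(2)] False neS nb 3 by blast
    next
      case True
      then obtain g where g: "\<sigma> = Inp g" by blast
      have sub: "fmdom f |\<subseteq>| fmdom g"
      proof
        fix a assume "a |\<in>| fmdom f"
        then obtain s where "fmlookup f a = Some s" by (auto simp: fmlookup_dom_iff)
        then show "a |\<in>| fmdom g" using D3a[of f a s g] 3 g nb by (auto simp: fmlookup_dom_iff)
      qed
      have "\<forall>a \<rho>a \<sigma>a. fmlookup f a = Some \<rho>a \<longrightarrow> fmlookup g a = Some \<sigma>a \<longrightarrow> compliant \<rho>a \<sigma>a"
        using D3b[of f _ _ g] 3 g nb compliant_bad by blast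
      then show ?thesis using sub g 3 by (auto simp: is_uout_def)
    qed
  qed
qed

end
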